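(* Let $K$ be a $W$-set for a continuous flow on a compact manifold $M$ which is not global, and let $\mathcal{W}$ be its witness region. Then $L:=M\setminus\mathcal{W}$ is nonempty and is the maximal compact invariant set contained in $M\setminus K$; consequently $L$ is an isolated invariant set. Moreover, $K\cup L$ is a global $W$-set.
   Context: For a continuous flow, $\omega(x)$ and $\omega^*(x)$ denote the $\omega$- and $\alpha$-limit sets of $x$. A compact invariant set is isolated if it is the maximal invariant subset of some compact neighbourhood of itself. Let $K$ be a compact invariant set. A point $x$ is witnessed by $K$ if its trajectory meets every neighbourhood of $K$ (equivalently $(\omega(x)\cup\omega^*(x))\cap K\neq\emptyset$). $K$ is a $W$-set if it has a neighbourhood all of whose points are witnessed by $K$; its witness region $\mathcal{W}(K)$ is the set of all points witnessed by $K$; $K$ is global if $\mathcal{W}(K)=M$. *)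

theory Defs
  imports "HOL-Analysis.Analysis"
begin

definition manifold :: "'a::metric_space set \<Rightarrow> 'n::euclidean_space itself \<Rightarrow> bool" where
  "manifold M _ \<longleftrightarrow>
     (\<forall>x\<in>M. \<exists>U V. openin (top_of_set M) U \<and> x \<in> U \<and> open (V::'n set) \<and> U homeomorphic V)"

definition is_flow :: "'a::topological_space set \<Rightarrow> (real \<Rightarrow> 'a \<Rightarrow> 'a) \<Rightarrow> bool" where
  "is_flow M \<phi> \<longleftrightarrow>
     continuous_on (UNIV \<times> M) (\<lambda>(t, x). \<phi> t x) \<and>
     (\<forall>t. \<forall>x\<in>M. \<phi> t x \<in> M) \<and>
     (\<forall>x\<in>M. \<phi> 0 x = x) \<and>
     (\<forall>s t. \<forall>x\<in>M. \<phi> (s + t) x = \<phi> s (\<phi> t x))"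

definition invariant :: "'a set \<Rightarrow> (real \<Rightarrow> 'a \<Rightarrow> 'a) \<Rightarrow> 'a set \<Rightarrow> bool" where
  "invariant M \<phi> S \<longleftrightarrow> S \<subseteq> M \<and> (\<forall>t. \<forall>x\<in>S. \<phi> t x \<in> S)"

definition open_nbhd :: "'a::topological_space set \<Rightarrow> 'a set \<Rightarrow> 'a set \<Rightarrow> bool" where
  "open_nbhd M K U \<longleftrightarrow> openin (top_of_set M) U \<and> K \<subseteq> U"

text \<open>x is witnessed by K: its trajectory meets every neighbourhood of K in M
  (it suffices to consider open neighbourhoods).\<close>
definition witnessed :: "'a::topological_space set \<Rightarrow> (real \<Rightarrow> 'a \<Rightarrow> 'a) \<Rightarrow> 'a set \<Rightarrow> 'a \<Rightarrow> bool" where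
  "witnessed M \<phi> K x \<longleftrightarrow> (\<forall>U. open_nbhd M K U \<longrightarrow> (\<exists>t. \<phi> t x \<in> U))"

definition witness_region :: "'a::topological_space set \<Rightarrow> (real \<Rightarrow> 'a \<Rightarrow> 'a) \<Rightarrow> 'a set \<Rightarrow> 'a set" where
  "witness_region M \<phi> K = {x \<in> M. witnessed M \<phi> K x}"

definition W_set :: "'a::topological_space set \<Rightarrow> (real \<Rightarrow> 'a \<Rightarrow> 'a) \<Rightarrow> 'a set \<Rightarrow> bool" where
  "W_set M \<phi> K \<longleftrightarrow> compact K \<and> invariant M \<phi> K \<and>
     (\<exists>U. open_nbhd M K U \<and> (\<forall>x\<in>U. witnessed M \<phi> K x))"

definition global :: "'a::topological_space set \<Rightarrow> (real \<Rightarrow> 'a \<Rightarrow> 'a) \<Rightarrow> 'a set \<Rightarrow> bool" where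
  "global M \<phi> K \<longleftrightarrow> witness_region M \<phi> K = M"

definition isolated_invariant :: "'a::topological_space set \<Rightarrow> (real \<Rightarrow> 'a \<Rightarrow> 'a) \<Rightarrow> 'a set \<Rightarrow> bool" where
  "isolated_invariant M \<phi> K \<longleftrightarrow> compact K \<and> invariant M \<phi> K \<and>
     (\<exists>N. compact N \<and> N \<subseteq> M \<and> (\<exists>U. open_nbhd M K U \<and> U \<subseteq> N) \<and>
          (\<forall>S. invariant M \<phi> S \<and> S \<subseteq> N \<longrightarrow> S \<subseteq> K))"

end

theory Submission
  imports Defs
begin

lemma wit_back:
  assumes "is_flow M \<phi>" "x \<in> M" "witnessed M \<phi> K (\<phi> t x)"
  shows "witnessed M \<phi> K x"
  unfolding witnessed_def
proof (intro allI impI)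
  fix V assume "open_nbhd M K V"
  then obtain s where "\<phi> s (\<phi> t x) \<in> V" using assms(3) unfolding witnessed_def by blast
  moreover have "\<phi> (s + t) x = \<phi> s (\<phi> t x)" using assms(1,2) unfolding is_flow_def by blast
  ultimately show "\<exists>t. \<phi> t x \<in> V" by metis
qed

theorem corollary7p2:
  fixes M :: "'a::metric_space set" and \<phi> :: "real \<Rightarrow> 'a \<Rightarrow> 'a" and K :: "'a set"
  assumes "compact M" and "manifold M TYPE('n::euclidean_space)"
    and "is_flow M \<phi>"
    and "W_set M \<phi> K" and "\<not> global M \<phi> K"
  defines "L \<equiv> M - witness_region M \<phi> K"
  shows "L \<noteq> {}
    \<and> compact L \<and> invariant M \<phi> L \<and> L \<subseteq> M - K
    \<and> (\<forall>S. compact S \<and> invariant M \<phi> S \<and> S \<subseteq> M - K \<longrightarrow> S \<subseteq> L)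
    \<and> isolated_invariant M \<phi> L
    \<and> W_set M \<phi> (K \<union> L) \<and> global M \<phi> (K \<union> L)"
proof -
  define W where "W = witness_region M \<phi> K"
  have fl: "continuous_on (UNIV \<times> M) (\<lambda>(t, x). \<phi> t x)" "\<And>t x. x \<in> M \<Longrightarrow> \<phi> t x \<in> M"
    "\<And>x. x \<in> M \<Longrightarrow> \<phi> 0 x = x"
    using assms(3) unfolding is_flow_def by auto
  obtain U where U: "open_nbhd M K U" "\<forall>x\<in>U. witnessed M \<phi> K x" "compact K" "invariant M \<phi> K"
    using assms(4) unfolding W_set_def by blast
  have KM: "K \<subseteq> M" using U(4) unfolding invariant_def by blast
  have UM: "U \<subseteq> M" using U(1) unfolding open_nbhd_def by (meson openin_imp_subset)
  have ct: "continuous_on M (\<phi> t)" for t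
  proof -
    have "continuous_on M ((\<lambda>(t, x). \<phi> t x) \<circ> (\<lambda>x. (t, x)))"
      by (rule continuous_on_compose) (auto intro!: continuous_intros continuous_on_subset[OF fl(1)])
    then show ?thesis by (simp add: o_def)
  qed
  have Weq: "W = (\<Union>t. M \<inter> \<phi> t -` U)"
  proof
    show "W \<subseteq> (\<Union>t. M \<inter> \<phi> t -` U)"
      using U(1) unfolding W_def witness_region_def witnessed_def by blast
    show "(\<Union>t. M \<inter> \<phi> t -` U) \<subseteq> W"
      using U(2) wit_back[OF assms(3)] unfolding W_def witness_region_def by blast
  qed
  have "openin (top_of_set M) W"
    unfolding Weq
  proof (rule openin_Union, clarify)
    fix t
    show "openin (top_of_set M) (M \<inter> \<phi> t -` U)"
      using continuous_openin_preimage[OF ct[of t], of M U] fl(2) U(1)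
      unfolding open_nbhd_def by blast
  qed
  then have "closedin (top_of_set M) L" unfolding L_def W_def[symmetric] by (simp add: closedin_diff)
  then have cL: "compact L" using assms(1) closedin_compact by blast
  have WM: "W \<subseteq> M" unfolding W_def witness_region_def by auto
  have Lne: "L \<noteq> {}" using assms(5) WM unfolding L_def W_def[symmetric] global_def by blast
  have invL: "invariant M \<phi> L"
    unfolding invariant_def L_def witness_region_def using fl(2) wit_back[OF assms(3)] by blast
  have KW: "K \<subseteq> W"
  proof
    fix x assume x: "x \<in> K"
    have "witnessed M \<phi> K x" unfolding witnessed_def open_nbhd_def
    proof (intro allI impI)
      fix V assume "openin (top_of_set M) V \<and> K \<subseteq> V"
      moreover have "x \<in> M" using x KM by blast
      ultimately have "\<phi> 0 x \<in> V" using x fl(3)[of x] by (metis subsetD)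
      then show "\<exists>t. \<phi> t x \<in> V" by blast
    qed
    then show "x \<in> W" using x KM unfolding W_def witness_region_def by blast
  qed
  have LK: "L \<subseteq> M - K" using KW unfolding L_def W_def by blast
  have notwit: "\<not> witnessed M \<phi> K x" if H: "invariant M \<phi> S" "x \<in> S" "openin (top_of_set M) V"
    "K \<subseteq> V" "S \<inter> V = {}" for S V x
  proof
    assume "witnessed M \<phi> K x"
    then obtain t where "\<phi> t x \<in> V" using H(3,4) unfolding witnessed_def open_nbhd_def by blast
    moreover have "\<phi> t x \<in> S" using H(1,2) unfolding invariant_def by blast
    ultimately show False using H(5) by blast
  qed
  have maxL: "\<forall>S. compact S \<and> invariant M \<phi> S \<and> S \<subseteq> M - K \<longrightarrow> S \<subseteq> L"
  proof (intro allI impI subsetI)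
    fix S x assume S: "compact S \<and> invariant M \<phi> S \<and> S \<subseteq> M - K" and x: "x \<in> S"
    have "open (-S)" using S compact_imp_closed open_Compl by blast
    then have "openin (top_of_set M) (-S \<inter> M)" by (metis openin_open_Int Int_commute)
    moreover have "-S \<inter> M = M - S" by blast
    ultimately have "openin (top_of_set M) (M - S)" by simp
    then have "\<not> witnessed M \<phi> K x" using notwit[of S x "M - S"] S x KM by blast
    then show "x \<in> L" using S x unfolding L_def witness_region_def invariant_def by blast
  qed
  have iso: "isolated_invariant M \<phi> L"
  proof -
    have "closed L" "closed K" using cL U(3) compact_imp_closed by auto
    moreover have "L \<inter> K = {}" using LK by blast
    ultimately obtain A B where AB: "open A" "open B" "L \<subseteq> A" "K \<subseteq> B" "A \<inter> B = {}"
      using t4_space[of L K] by blast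
    have "closed M" using assms(1) compact_imp_closed by blast
    then have "closed (M - B)" using AB(2) by (rule closed_Diff)
    moreover have "M - B \<subseteq> M" by blast
    ultimately have cN: "compact (M - B)" using assms(1) compact_Int_closed[of M "M - B"]
      by (simp add: Int_absorb1)
    show ?thesis unfolding isolated_invariant_def
    proof (intro conjI exI allI impI)
      show "compact L" by (fact cL)
      show "invariant M \<phi> L" by (fact invL)
      show "compact (M - B)" by (fact cN)
      show "M - B \<subseteq> M" by blast
      show "open_nbhd M L (M \<inter> A)" using AB LK unfolding open_nbhd_def
        by (auto simp: openin_open_Int)
      show "M \<inter> A \<subseteq> M - B" using AB by blast
    next
      fix S assume S: "invariant M \<phi> S \<and> S \<subseteq> M - B"
      show "S \<subseteq> L"
      proof
        fix x assume x: "x \<in> S"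
        have "\<not> witnessed M \<phi> K x"
        proof (rule notwit[of S x "M \<inter> B"])
          show "invariant M \<phi> S" "x \<in> S" using S x by auto
          show "openin (top_of_set M) (M \<inter> B)" using AB(2) by (metis openin_open_Int Int_commute)
          show "K \<subseteq> M \<inter> B" using AB KM by blast
          show "S \<inter> (M \<inter> B) = {}" using S by blast
        qed
        then show "x \<in> L" using S x unfolding L_def witness_region_def invariant_def by blast
      qed
    qed
  qed
  have allwit: "\<forall>x\<in>M. witnessed M \<phi> (K \<union> L) x"
  proof
    fix x assume x: "x \<in> M"
    show "witnessed M \<phi> (K \<union> L) x"
    proof (cases "x \<in> L")
      case True
      show ?thesis unfolding witnessed_def open_nbhd_def
      proof (intro allI impI)
        fix V assume "openin (top_of_set M) V \<and> K \<union> L \<subseteq> V"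
        then have "\<phi> 0 x \<in> V" using True fl(3)[OF x] by auto
        then show "\<exists>t. \<phi> t x \<in> V" by blast
      qed
    next
      case False
      then have "witnessed M \<phi> K x" using x unfolding L_def witness_region_def by blast
      then show ?thesis unfolding witnessed_def open_nbhd_def by blast
    qed
  qed
  have invKL: "invariant M \<phi> (K \<union> L)" using U(4) invL unfolding invariant_def by blast
  have nKL: "open_nbhd M (K \<union> L) M" using KM LK unfolding open_nbhd_def by auto
  have WKL: "W_set M \<phi> (K \<union> L)" unfolding W_set_def
    using cL U(3) invKL allwit nKL compact_Un by blast
  have gKL: "global M \<phi> (K \<union> L)" unfolding global_def witness_region_def using allwit by blast
  show ?thesis using Lne cL invL LK maxL iso WKL gKL by blast
qed

end
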